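(* Let $X\subset\mathbb{R}^n$ be a closed set which is the closure of its interior, let $f:X\to\mathbb{R}^n$ be locally Lipschitz, and consider $\dot x=f(x)$ with flow $\varphi_t$, assumed forward complete: for each $\xi\in X$ the solution $\varphi_t(\xi)$ is uniquely maximally defined (in $X$) on an interval $I_\xi\subset\mathbb{R}$ containing $[0,+\infty)$ in its interior. Let $K\subset\mathbb{R}^n$ be a closed convex cone with nonempty interior, and suppose the system is strongly monotone: for all $\xi_1,\xi_2\in X$, $\xi_1\succ\xi_2$ implies $\varphi_t(\xi_1)\gg\varphi_t(\xi_2)$ for all $t>0$. Suppose there is $v\in\operatorname{int}(K)$ with $|v|=1$ such that $X$ is invariant under translation by $v$ (i.e. $x\in X\Rightarrow x+\lambda v\in X$ for all $\lambda\in\mathbb{R}$) and the flow is translation invariant: $\varphi_t(\xi+\lambda v)=\varphi_t(\xi)+\lambda v$ for all $\lambda\in\mathbb{R}$, all $\xi\in X$ and all $t$ at which $\varphi_t(\xi)$ is defined. Let $\pi_v(x)=x-(v'x)v$. Then for every $\xi\in X$ such that $t\mapsto\pi_v(\varphi_t(\xi))$ is bounded on $[0,\infty)$, $\pi_v(\varphi_t(\xi))$ converges as $t\to+\infty$ to an equilibrium of the projected system $\dot{\tilde x}=(I-vv')f(\tilde x)$ on $\tilde X=X\cap v^{\perp}$. Moreover, this equilibrium is unique: the projected system has no other equilibrium.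
   Context: The cone $K$ satisfies $K+K\subset K$, $\alpha K\subset K$ for $\alpha\ge 0$, $K\cap(-K)=\{0\}$. Orders: $\xi_1\succeq\xi_2$ iff $\xi_1-\xi_2\in K$; $\xi_1\succ\xi_2$ iff $\xi_1\succeq\xi_2$ and $\xi_1\ne\xi_2$; $\xi_1\gg\xi_2$ iff $\xi_1-\xi_2\in\operatorname{int}(K)$. Prime denotes transpose; $\pi_v$ is the orthogonal projection onto $v^\perp$. *)

theory Defs
  imports "HOL-Analysis.Analysis"
begin

definition cone_ge :: "('a::real_vector) set \<Rightarrow> 'a \<Rightarrow> 'a \<Rightarrow> bool" where
  "cone_ge K a b \<longleftrightarrow> a - b \<in> K"

definition cone_gt :: "('a::real_vector) set \<Rightarrow> 'a \<Rightarrow> 'a \<Rightarrow> bool" where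
  "cone_gt K a b \<longleftrightarrow> cone_ge K a b \<and> a \<noteq> b"

definition cone_gg :: "('a::real_normed_vector) set \<Rightarrow> 'a \<Rightarrow> 'a \<Rightarrow> bool" where
  "cone_gg K a b \<longleftrightarrow> a - b \<in> interior K"

definition pointed_cone :: "('a::real_vector) set \<Rightarrow> bool" where
  "pointed_cone K \<longleftrightarrow> (\<forall>a\<in>K. \<forall>b\<in>K. a + b \<in> K) \<and> (\<forall>a\<in>K. \<forall>\<alpha>::real. \<alpha> \<ge> 0 \<longrightarrow> \<alpha> *\<^sub>R a \<in> K)
     \<and> K \<inter> uminus ` K = {0}"

definition proj_perp :: "'a::real_inner \<Rightarrow> 'a \<Rightarrow> 'a" where
  "proj_perp v x = x - (v \<bullet> x) *\<^sub>R v"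

definition is_solution :: "'a::real_normed_vector set \<Rightarrow> ('a \<Rightarrow> 'a) \<Rightarrow> real set \<Rightarrow> (real \<Rightarrow> 'a) \<Rightarrow> bool" where
  "is_solution X f J y \<longleftrightarrow> is_interval J \<and>
     (\<forall>t\<in>J. y t \<in> X \<and> (y has_vector_derivative f (y t)) (at t within J))"

definition is_max_flow :: "'a::real_normed_vector set \<Rightarrow> ('a \<Rightarrow> 'a) \<Rightarrow> ('a \<Rightarrow> real set) \<Rightarrow> (real \<Rightarrow> 'a \<Rightarrow> 'a) \<Rightarrow> bool" where
  "is_max_flow X f I phi \<longleftrightarrow> (\<forall>\<xi>\<in>X. 0 \<in> I \<xi> \<and> phi 0 \<xi> = \<xi> \<and> is_solution X f (I \<xi>) (\<lambda>t. phi t \<xi>) \<and>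
     (\<forall>J y. 0 \<in> J \<and> y 0 = \<xi> \<and> is_solution X f J y \<longrightarrow> J \<subseteq> I \<xi> \<and> (\<forall>t\<in>J. y t = phi t \<xi>)))"

end

theory Submission
  imports Defs
begin


locale conev =
  fixes K :: "'a::euclidean_space set" and v :: 'a
  assumes K_closed: "closed K" and K_cone: "pointed_cone K"
    and v_int: "v \<in> interior K" and v_norm: "norm v = 1"
begin

lemma Kadd: "a \<in> K \<Longrightarrow> b \<in> K \<Longrightarrow> a + b \<in> K"
  using K_cone unfolding pointed_cone_def by blast

lemma Kscale: "a \<in> K \<Longrightarrow> (c::real) \<ge> 0 \<Longrightarrow> c *\<^sub>R a \<in> K"
  using K_cone unfolding pointed_cone_def by blast

lemma Kpointed: "a \<in> K \<Longrightarrow> - a \<in> K \<Longrightarrow> a = 0"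
proof -
  assume "a \<in> K" "- a \<in> K"
  then have "a \<in> K \<inter> uminus ` K" by (metis IntI image_eqI minus_minus)
  then show "a = 0" using K_cone unfolding pointed_cone_def by blast
qed

lemma K0: "0 \<in> K"
  using K_cone unfolding pointed_cone_def by blast

lemma vK: "v \<in> K" using v_int interior_subset by blast

lemma v_nz: "v \<noteq> 0" using v_norm by auto

lemma vv: "v \<bullet> v = 1" using v_norm by (simp add: norm_eq_1)

lemma scale_vK: "c *\<^sub>R v \<in> K \<Longrightarrow> c \<ge> 0"
proof (rule ccontr)
  assume a: "c *\<^sub>R v \<in> K" "\<not> c \<ge> 0"
  have "(- 1 / c) *\<^sub>R (c *\<^sub>R v) \<in> K" by (rule Kscale[OF a(1)]) (use a in auto)
  then have "- v \<in> K" using a by simp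
  then show False using Kpointed vK v_nz by blast
qed

definition R :: real where "R = (SOME R. R > 0 \<and> (\<forall>z. (R * norm z) *\<^sub>R v + z \<in> K))"

lemma R_ex: "\<exists>R>0. \<forall>z. (R * norm z) *\<^sub>R v + z \<in> K"
proof -
  obtain e where e: "e > 0" "ball v e \<subseteq> K" using v_int mem_interior by blast
  define r where "r = e / 2"
  have r: "r > 0" "r < e" using e by (auto simp: r_def)
  have "(1 / r * norm z) *\<^sub>R v + z \<in> K" for z
  proof (cases "z = 0")
    case True then show ?thesis using K0 by simp
  next
    case False
    then have nz: "norm z > 0" by simp
    have "v + (r / norm z) *\<^sub>R z \<in> ball v e"
      using r nz by (simp add: dist_norm)
    then have "v + (r / norm z) *\<^sub>R z \<in> K" using e by blast
    then have "(norm z / r) *\<^sub>R (v + (r / norm z) *\<^sub>R z) \<in> K"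
      using r nz by (intro Kscale) auto
    also have "(norm z / r) *\<^sub>R (v + (r / norm z) *\<^sub>R z) = (1 / r * norm z) *\<^sub>R v + z"
      using r nz by (simp add: algebra_simps)
    finally show ?thesis .
  qed
  then show ?thesis using r by (intro exI[of _ "1/r"]) auto
qed

lemma R_pos: "R > 0" and R_bound: "(R * norm z) *\<^sub>R v + z \<in> K"
  using someI_ex[OF R_ex] unfolding R_def[symmetric] by auto

definition S :: "'a \<Rightarrow> real set" where "S z = {l. l *\<^sub>R v - z \<in> K}"

definition M :: "'a \<Rightarrow> real" where "M z = Inf (S z)"

definition osc :: "'a \<Rightarrow> real" where "osc z = M z + M (- z)"

lemma S_lower: "l \<in> S z \<Longrightarrow> l \<ge> - R * norm z"
proof -
  assume "l \<in> S z"
  then have "(l *\<^sub>R v - z) + ((R * norm z) *\<^sub>R v + z) \<in> K"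
    using R_bound Kadd unfolding S_def by blast
  then have "(l + R * norm z) *\<^sub>R v \<in> K" by (simp add: algebra_simps)
  then show ?thesis using scale_vK by fastforce
qed

lemma S_mem: "R * norm z \<in> S z"
  using R_bound[of "- z"] unfolding S_def by simp

lemma S_closed: "closed (S z)"
proof -
  have "closed ((\<lambda>l::real. l *\<^sub>R v - z) -` K)"
    by (rule continuous_closed_vimage[OF K_closed]) (intro continuous_intros)
  then show ?thesis unfolding S_def vimage_def by simp
qed

lemma S_bdd: "bdd_below (S z)"
  using S_lower by (meson bdd_below.I)

lemma M_in: "M z *\<^sub>R v - z \<in> K"
proof -
  have "M z \<in> S z" unfolding M_def
    using closed_contains_Inf[OF _ S_bdd S_closed] S_mem by blast
  then show ?thesis unfolding S_def by simp
qed

lemma M_le: "l *\<^sub>R v - z \<in> K \<Longrightarrow> M z \<le> l"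
  unfolding M_def by (rule cInf_lower) (use S_bdd[unfolded S_def] in \<open>auto simp: S_def\<close>)

lemma M_lt: assumes "l *\<^sub>R v - z \<in> interior K" shows "M z < l"
proof -
  obtain e where e: "e > 0" "ball (l *\<^sub>R v - z) e \<subseteq> K" using assms mem_interior by blast
  have "(l - e/2) *\<^sub>R v - z \<in> ball (l *\<^sub>R v - z) e"
    using e v_norm by (simp add: dist_norm algebra_simps)
  then have "M z \<le> l - e/2" using e by (intro M_le) blast
  then show ?thesis using e by simp
qed

lemma M_upper: "M z \<le> R * norm z"
  using S_mem unfolding S_def by (intro M_le) simp

lemma M_lower: "M z \<ge> - R * norm z"
  using S_lower M_in unfolding S_def by blast

lemma M_transl: "M (z + c *\<^sub>R v) = M z + c"
proof (rule antisym)
  have "(M z + c) *\<^sub>R v - (z + c *\<^sub>R v) = M z *\<^sub>R v - z" by (simp add: algebra_simps)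
  then show "M (z + c *\<^sub>R v) \<le> M z + c" using M_in[of z] M_le by metis
  have "(M (z + c *\<^sub>R v) - c) *\<^sub>R v - z = M (z + c *\<^sub>R v) *\<^sub>R v - (z + c *\<^sub>R v)"
    by (simp add: algebra_simps)
  then have "M z \<le> M (z + c *\<^sub>R v) - c" using M_in[of "z + c *\<^sub>R v"] M_le by metis
  then show "M z + c \<le> M (z + c *\<^sub>R v)" by simp
qed

lemma M0: "M 0 = 0"
proof (rule antisym)
  show "M 0 \<le> 0" using K0 by (intro M_le) simp
  show "M 0 \<ge> 0" using M_in[of 0] scale_vK by simp
qed

lemma M_v: "M (c *\<^sub>R v) = c"
  using M_transl[of 0 c] M0 by simp

lemma M_sub: "M (z + w) \<le> M z + M w"
proof -
  have "(M z *\<^sub>R v - z) + (M w *\<^sub>R v - w) \<in> K" using M_in Kadd by blast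
  then have "(M z + M w) *\<^sub>R v - (z + w) \<in> K" by (simp add: algebra_simps)
  then show ?thesis by (rule M_le)
qed

lemma osc_nonneg: "osc z \<ge> 0"
  using M_sub[of z "- z"] M0 unfolding osc_def by simp

lemma osc_sym: "osc (- z) = osc z"
  unfolding osc_def by simp

lemma osc_sub: "osc (z + w) \<le> osc z + osc w"
  using M_sub[of z w] M_sub[of "- z" "- w"] unfolding osc_def by simp

lemma osc_transl: "osc (z + c *\<^sub>R v) = osc z"
  using M_transl[of z c] M_transl[of "- z" "- c"] unfolding osc_def by (simp add: algebra_simps)

lemma osc_v: "osc (c *\<^sub>R v) = 0"
  using osc_transl[of 0 c] unfolding osc_def by (simp add: M0)

lemma osc_upper: "osc z \<le> 2 * R * norm z"
  using M_upper[of z] M_upper[of "- z"] unfolding osc_def by simp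

lemma osc_zero: "osc z = 0 \<Longrightarrow> z = M z *\<^sub>R v"
proof -
  assume "osc z = 0"
  then have "M (- z) = - M z" unfolding osc_def by simp
  then have a: "(- M z) *\<^sub>R v + z \<in> K" using M_in[of "- z"] by simp
  have b: "M z *\<^sub>R v - z \<in> K" by (rule M_in)
  have "M z *\<^sub>R v - z = 0" using Kpointed[OF b] a by (simp add: algebra_simps)
  then show ?thesis by simp
qed

lemma interval_bounded: "\<exists>B. \<forall>w. w \<in> K \<and> v - w \<in> K \<longrightarrow> norm w \<le> B"
proof (rule ccontr)
  assume "\<not> ?thesis"
  then have "\<forall>B. \<exists>w. w \<in> K \<and> v - w \<in> K \<and> norm w > B" by (simp add: not_le)
  then have "\<forall>n::nat. \<exists>w. w \<in> K \<and> v - w \<in> K \<and> norm w > real n + 1"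
    by blast
  then obtain w where w0: "\<forall>n. w n \<in> K \<and> v - w n \<in> K \<and> norm (w n) > real n + 1"
    using choice[of "\<lambda>n w. w \<in> K \<and> v - w \<in> K \<and> norm w > real n + 1"] by blast
  then have w: "\<And>n. w n \<in> K" "\<And>n. v - w n \<in> K" "\<And>n. norm (w n) > real n + 1"
    by auto
  have wpos: "norm (w n) > 0" for n using w(3)[of n] of_nat_0_le_iff[of n] by linarith
  define u where "u n = (1 / norm (w n)) *\<^sub>R w n" for n
  have nu: "norm (u n) = 1" for n using wpos[of n] by (simp add: u_def)
  have "bounded (range u)" using nu by (auto simp: bounded_iff intro!: exI[of _ 1])
  then obtain d r where r: "strict_mono (r::nat\<Rightarrow>nat)" "(u \<circ> r) \<longlonglongrightarrow> d"
    using bounded_imp_convergent_subsequence by blast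
  have nd: "norm d = 1"
  proof -
    have "((\<lambda>n. norm ((u \<circ> r) n)) \<longlonglongrightarrow> norm d)" using r(2) by (rule tendsto_norm)
    then show ?thesis using nu by (simp add: o_def LIMSEQ_const_iff)
  qed
  have uK: "u n \<in> K" for n unfolding u_def using w(1) by (intro Kscale) auto
  have dK: "d \<in> K" using closed_sequentially[OF K_closed _ r(2)] uK by simp
  have uK2: "(1 / norm (w n)) *\<^sub>R v - u n \<in> K" for n
  proof -
    have "(1 / norm (w n)) *\<^sub>R (v - w n) \<in> K" using w(2) by (intro Kscale) auto
    then show ?thesis by (simp add: u_def algebra_simps)
  qed
  have lim0: "(\<lambda>n. 1 / norm (w (r n))) \<longlonglongrightarrow> 0"
  proof (rule LIMSEQ_I)
    fix e :: real assume e: "e > 0"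
    obtain N :: nat where N: "1 / e < N" using reals_Archimedean2 by blast
    show "\<exists>N. \<forall>n\<ge>N. norm (1 / norm (w (r n)) - 0) < e"
    proof (intro exI allI impI)
      fix n assume n: "N \<le> n"
      have "n \<le> r n" using r(1) by (simp add: strict_mono_imp_increasing)
      then have "real N \<le> real (r n)" using n by simp
      then have big: "norm (w (r n)) > 1 / e" using N w(3)[of "r n"] by simp
      have "1 / norm (w (r n)) < e"
        using big e wpos[of "r n"] by (simp add: field_simps)
      then show "norm (1 / norm (w (r n)) - 0) < e" using wpos[of "r n"] by simp
    qed
  qed
  have "(\<lambda>n. (1 / norm (w (r n))) *\<^sub>R v - u (r n)) \<longlonglongrightarrow> 0 *\<^sub>R v - d"
    using r(2) lim0 by (intro tendsto_intros) (auto simp: o_def)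
  then have "- d \<in> K" using closed_sequentially[OF K_closed uK2] by simp
  then have "d = 0" using Kpointed dK by blast
  then show False using nd by simp
qed

definition B :: real where "B = (SOME B. \<forall>w. w \<in> K \<and> v - w \<in> K \<longrightarrow> norm w \<le> B)"

lemma B_bound: "w \<in> K \<Longrightarrow> v - w \<in> K \<Longrightarrow> norm w \<le> B"
  using someI_ex[OF interval_bounded] unfolding B_def[symmetric] by blast

lemma proj_norm: "norm (proj_perp v y) \<le> norm y"
proof -
  define p where "p = proj_perp v y"
  have peq: "p = y - (v \<bullet> y) *\<^sub>R v" unfolding p_def proj_perp_def by simp
  have o: "p \<bullet> v = 0"
  proof -
    have "p \<bullet> v = y \<bullet> v - (v \<bullet> y) * (v \<bullet> v)" unfolding peq by (simp add: inner_diff_left)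
    also have "\<dots> = 0" using vv by (simp add: inner_commute)
    finally show ?thesis .
  qed
  have "p \<bullet> p = p \<bullet> (y - (v \<bullet> y) *\<^sub>R v)" by (subst (2) peq) (rule refl)
  also have "\<dots> = p \<bullet> y - (v \<bullet> y) * (p \<bullet> v)" by (simp add: inner_diff_right)
  also have "\<dots> = p \<bullet> y" using o by simp
  also have "\<dots> \<le> norm p * norm y" by (rule norm_cauchy_schwarz)
  finally have le: "norm p * norm p \<le> norm p * norm y" by (simp add: norm_eq_sqrt_inner)
  show ?thesis
  proof (cases "norm p = 0")
    case True then show ?thesis unfolding p_def by simp
  next
    case False then have "norm p > 0" by simp
    then show ?thesis using le unfolding p_def by simp
  qed
qed

lemma proj_v: "proj_perp v (z + c *\<^sub>R v) = proj_perp v z"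
  unfolding proj_perp_def using vv by (simp add: inner_add_right algebra_simps)

lemma proj_osc: "norm (proj_perp v z) \<le> B * osc z"
proof -
  define w where "w = z + M (- z) *\<^sub>R v"
  have wK: "w \<in> K" using M_in[of "- z"] unfolding w_def by (simp add: algebra_simps)
  have w2: "osc z *\<^sub>R v - w \<in> K" using M_in[of z] unfolding w_def osc_def
    by (simp add: algebra_simps)
  have nw: "norm w \<le> B * osc z"
  proof (cases "osc z = 0")
    case True
    then have "w = 0" using Kpointed[OF wK] w2 by simp
    then show ?thesis using True by simp
  next
    case False
    then have op: "osc z > 0" using osc_nonneg[of z] by simp
    have "(1 / osc z) *\<^sub>R w \<in> K" using wK op by (intro Kscale) auto
    moreover have "v - (1 / osc z) *\<^sub>R w \<in> K"
    proof -
      have "(1 / osc z) *\<^sub>R (osc z *\<^sub>R v - w) \<in> K" using w2 op by (intro Kscale) auto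
      then show ?thesis using op by (simp add: algebra_simps)
    qed
    ultimately have "norm ((1 / osc z) *\<^sub>R w) \<le> B" by (rule B_bound)
    then show ?thesis using op by (simp add: field_simps)
  qed
  have "proj_perp v z = proj_perp v w" unfolding w_def by (simp add: proj_v)
  then show ?thesis using proj_norm[of w] nw by simp
qed

end


locale tsys = conev K v for K :: "'a::euclidean_space set" and v :: 'a +
  fixes X :: "'a set" and f :: "'a \<Rightarrow> 'a" and I :: "'a \<Rightarrow> real set" and phi :: "real \<Rightarrow> 'a \<Rightarrow> 'a"
  assumes X_closed: "closed X" and flow: "is_max_flow X f I phi"
    and fwd: "\<forall>\<xi>\<in>X. {0..} \<subseteq> interior (I \<xi>)"
    and mono: "\<forall>\<xi>1\<in>X. \<forall>\<xi>2\<in>X. cone_gt K \<xi>1 \<xi>2 \<longrightarrow>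
                 (\<forall>t>0. cone_gg K (phi t \<xi>1) (phi t \<xi>2))"
    and X_transl: "\<forall>x\<in>X. \<forall>c::real. x + c *\<^sub>R v \<in> X"
    and flow_transl: "\<forall>\<xi>\<in>X. \<forall>c::real. \<forall>t\<in>I \<xi>. phi t (\<xi> + c *\<^sub>R v) = phi t \<xi> + c *\<^sub>R v"
begin

lemma fl0: "\<xi> \<in> X \<Longrightarrow> 0 \<in> I \<xi>" and fl_id: "\<xi> \<in> X \<Longrightarrow> phi 0 \<xi> = \<xi>"
  and fl_sol: "\<xi> \<in> X \<Longrightarrow> is_solution X f (I \<xi>) (\<lambda>t. phi t \<xi>)"
  using flow unfolding is_max_flow_def by auto

lemma fl_uniq: "\<xi> \<in> X \<Longrightarrow> 0 \<in> J \<Longrightarrow> y 0 = \<xi> \<Longrightarrow> is_solution X f J y \<Longrightarrow>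
   J \<subseteq> I \<xi> \<and> (\<forall>t\<in>J. y t = phi t \<xi>)"
  using flow unfolding is_max_flow_def by blast

lemma I_pos: "\<xi> \<in> X \<Longrightarrow> t \<ge> 0 \<Longrightarrow> t \<in> I \<xi>"
  using fwd interior_subset by fastforce

lemma Ici_sub: "\<xi> \<in> X \<Longrightarrow> {0..} \<subseteq> I \<xi>"
  using I_pos by auto

lemma I_interval: "\<xi> \<in> X \<Longrightarrow> is_interval (I \<xi>)"
  using fl_sol unfolding is_solution_def by blast

lemma phiX: "\<xi> \<in> X \<Longrightarrow> t \<in> I \<xi> \<Longrightarrow> phi t \<xi> \<in> X"
  using fl_sol unfolding is_solution_def by blast

lemma phiX_pos: "\<xi> \<in> X \<Longrightarrow> t \<ge> 0 \<Longrightarrow> phi t \<xi> \<in> X"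
  using phiX I_pos by blast

lemma phi_deriv: "\<xi> \<in> X \<Longrightarrow> t \<in> I \<xi> \<Longrightarrow>
   ((\<lambda>t. phi t \<xi>) has_vector_derivative f (phi t \<xi>)) (at t within I \<xi>)"
  using fl_sol unfolding is_solution_def by blast

lemma semigroup:
  assumes xi: "\<xi> \<in> X" and s: "s \<ge> 0" and t: "t \<ge> 0"
  shows "phi t (phi s \<xi>) = phi (t + s) \<xi>"
proof -
  define \<eta> where "\<eta> = phi s \<xi>"
  have eta: "\<eta> \<in> X" unfolding \<eta>_def using phiX_pos xi s by blast
  define J where "J = {t. t + s \<in> I \<xi>}"
  define y where "y t = phi (t + s) \<xi>" for t
  have J0: "0 \<in> J" unfolding J_def using I_pos xi s by simp
  have y0: "y 0 = \<eta>" unfolding y_def \<eta>_def by simp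
  have Jint: "is_interval J"
    unfolding is_interval_1
  proof (intro ballI allI impI)
    fix a b x assume ab: "a \<in> J" "b \<in> J" "a \<le> x \<and> x \<le> b"
    then have abI: "a + s \<in> I \<xi>" "b + s \<in> I \<xi>" by (simp_all add: J_def)
    have "a + s \<le> x + s" "x + s \<le> b + s" using ab(3) by simp_all
    then have "x + s \<in> I \<xi>" using I_interval[OF xi, unfolded is_interval_1] abI by blast
    then show "x \<in> J" by (simp add: J_def)
  qed
  have sol: "is_solution X f J y"
    unfolding is_solution_def
  proof (intro conjI ballI Jint)
    fix u assume u: "u \<in> J"
    then have us: "u + s \<in> I \<xi>" unfolding J_def by simp
    show "y u \<in> X" unfolding y_def using phiX[OF xi us] .
    have d1: "((\<lambda>t. t + s) has_vector_derivative 1) (at u within J)"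
      by (auto intro!: derivative_eq_intros)
    have "(\<lambda>t. t + s) ` J \<subseteq> I \<xi>" unfolding J_def by auto
    then have d2: "((\<lambda>t. phi t \<xi>) has_vector_derivative f (phi (u + s) \<xi>)) (at (u + s) within (\<lambda>t. t + s) ` J)"
      using phi_deriv[OF xi us] has_vector_derivative_within_subset by blast
    have "(((\<lambda>t. phi t \<xi>) \<circ> (\<lambda>t. t + s)) has_vector_derivative (1 *\<^sub>R f (phi (u + s) \<xi>))) (at u within J)"
      by (rule vector_diff_chain_within[OF d1 d2])
    then show "(y has_vector_derivative f (y u)) (at u within J)"
      unfolding y_def by (simp add: o_def)
  qed
  have "t \<in> J" unfolding J_def using I_pos xi s t by simp
  then show ?thesis using fl_uniq[OF eta J0 y0 sol] unfolding y_def \<eta>_def by simp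
qed

lemma at0_nontriv: "at (0::real) within {0..} \<noteq> bot"
  by (simp add: at_within_Ici_at_right)

lemma f_transl:
  assumes x: "x \<in> X" shows "f (x + c *\<^sub>R v) = f x"
proof -
  define x' where "x' = x + c *\<^sub>R v"
  have x': "x' \<in> X" unfolding x'_def using X_transl x by blast
  have d1: "((\<lambda>t. phi t x') has_vector_derivative f x') (at 0 within {0..})"
    using phi_deriv[OF x' fl0[OF x']] fl_id[OF x'] has_vector_derivative_within_subset Ici_sub[OF x']
    by fastforce
  have d2: "((\<lambda>t. phi t x) has_vector_derivative f x) (at 0 within {0..})"
    using phi_deriv[OF x fl0[OF x]] fl_id[OF x] has_vector_derivative_within_subset Ici_sub[OF x]
    by fastforce
  then have d2': "((\<lambda>t. phi t x + c *\<^sub>R v) has_vector_derivative f x) (at 0 within {0..})"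
    by (simp add: has_vector_derivative_add_const)
  have "((\<lambda>t. phi t x') has_vector_derivative f x) (at 0 within {0..})"
  proof (rule has_vector_derivative_transform[OF _ _ d2'])
    show "(0::real) \<in> {0..}" by simp
    fix t :: real assume "t \<in> {0..}"
    then show "phi t x' = phi t x + c *\<^sub>R v"
      unfolding x'_def using flow_transl x I_pos by auto
  qed
  then have "f x' = f x" using vector_derivative_unique_within[OF at0_nontriv d1] by blast
  then show ?thesis unfolding x'_def .
qed

lemma equil_flow:
  assumes e: "e \<in> X" and pf: "proj_perp v (f e) = 0"
  shows "phi t e = e + (t * (v \<bullet> f e)) *\<^sub>R v"
proof -
  define \<alpha> where "\<alpha> = v \<bullet> f e"
  have fe: "f e = \<alpha> *\<^sub>R v" using pf unfolding proj_perp_def \<alpha>_def by simp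
  define y where "y t = e + (t * \<alpha>) *\<^sub>R v" for t
  have sol: "is_solution X f UNIV y"
    unfolding is_solution_def
  proof (intro conjI ballI is_interval_univ)
    fix u :: real
    show "y u \<in> X" unfolding y_def using X_transl e by blast
    have "f (y u) = \<alpha> *\<^sub>R v" unfolding y_def using f_transl[OF e] fe by simp
    moreover have "(y has_vector_derivative \<alpha> *\<^sub>R v) (at u within UNIV)"
      unfolding y_def by (auto intro!: derivative_eq_intros)
    ultimately show "(y has_vector_derivative f (y u)) (at u within UNIV)" by simp
  qed
  have "y t = phi t e" using fl_uniq[OF e _ _ sol] unfolding y_def by simp
  then show ?thesis unfolding y_def \<alpha>_def by simp
qed

lemma equil_of_flow:
  assumes q: "q \<in> X" and h: "\<forall>h\<ge>0. \<exists>c. phi h q = q + c *\<^sub>R v"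
  shows "proj_perp v (f q) = 0"
proof -
  define L where "L x = (v \<bullet> x) *\<^sub>R v" for x
  have bl: "bounded_linear L" unfolding L_def
    by (rule bounded_linear_compose[OF bounded_linear_scaleR_left bounded_linear_inner_right])
  have d1: "((\<lambda>t. phi t q) has_vector_derivative f q) (at 0 within {0..})"
    using phi_deriv[OF q fl0[OF q]] fl_id[OF q] has_vector_derivative_within_subset Ici_sub[OF q]
    by fastforce
  have "((\<lambda>t. phi t q - q) has_vector_derivative f q) (at 0 within {0..})"
    using d1 has_vector_derivative_diff[OF d1 has_vector_derivative_const[of q]] by simp
  then have "((\<lambda>t. L (phi t q - q)) has_vector_derivative L (f q)) (at 0 within {0..})"
    by (rule bounded_linear.has_vector_derivative[OF bl])
  then have d2: "((\<lambda>t. L (phi t q - q) + q) has_vector_derivative L (f q)) (at 0 within {0..})"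
    by (simp add: has_vector_derivative_add_const)
  have "((\<lambda>t. phi t q) has_vector_derivative L (f q)) (at 0 within {0..})"
  proof (rule has_vector_derivative_transform[OF _ _ d2])
    show "(0::real) \<in> {0..}" by simp
    fix t :: real assume "t \<in> {0..}"
    then obtain c where c: "phi t q = q + c *\<^sub>R v" using h by auto
    show "phi t q = L (phi t q - q) + q" unfolding L_def c using vv by simp
  qed
  then have "f q = L (f q)" using vector_derivative_unique_within[OF at0_nontriv d1] by blast
  then show ?thesis unfolding proj_perp_def L_def by simp
qed

lemma M_flow:
  assumes a: "a \<in> X" and b: "b \<in> X" and t: "t \<ge> 0"
  shows "M (phi t a - phi t b) \<le> M (a - b) \<and>
         (t > 0 \<and> a - b \<noteq> M (a - b) *\<^sub>R v \<longrightarrow> M (phi t a - phi t b) < M (a - b))"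
proof -
  define \<mu> where "\<mu> = M (a - b)"
  define b' where "b' = b + \<mu> *\<^sub>R v"
  have b': "b' \<in> X" unfolding b'_def using X_transl b by blast
  have ge: "b' - a \<in> K" using M_in[of "a - b"] unfolding b'_def \<mu>_def by (simp add: algebra_simps)
  have pb': "phi s b' = phi s b + \<mu> *\<^sub>R v" if "s \<ge> 0" for s
    unfolding b'_def using flow_transl b I_pos[OF b that] by blast
  show ?thesis
  proof (cases "b' = a")
    case True
    then have "phi t a - phi t b = \<mu> *\<^sub>R v" using pb'[OF t] by simp
    moreover have "a - b = \<mu> *\<^sub>R v" by (subst True[unfolded b'_def, symmetric]) simp
    ultimately show ?thesis using M_v unfolding \<mu>_def by simp
  next
    case False
    then have gt: "cone_gt K b' a" unfolding cone_gt_def cone_ge_def using ge by simp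
    show ?thesis
    proof (cases "t = 0")
      case True then show ?thesis using fl_id a b by simp
    next
      case False
      then have "t > 0" using t by simp
      then have "cone_gg K (phi t b') (phi t a)" using mono b' a gt by blast
      then have "\<mu> *\<^sub>R v - (phi t a - phi t b) \<in> interior K"
        unfolding cone_gg_def pb'[OF t] by (simp add: algebra_simps)
      then have "M (phi t a - phi t b) < \<mu>" by (rule M_lt)
      then show ?thesis unfolding \<mu>_def by simp
    qed
  qed
qed

lemma osc_flow:
  assumes a: "a \<in> X" and b: "b \<in> X" and t: "t \<ge> 0"
  shows "osc (phi t a - phi t b) \<le> osc (a - b)"
  using M_flow[OF a b t] M_flow[OF b a t] unfolding osc_def by (simp add: minus_diff_eq)

lemma osc_flow_strict:
  assumes a: "a \<in> X" and b: "b \<in> X" and t: "t > 0" and o: "osc (a - b) > 0"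
  shows "osc (phi t a - phi t b) < osc (a - b)"
proof -
  have n1: "a - b \<noteq> M (a - b) *\<^sub>R v"
  proof
    assume "a - b = M (a - b) *\<^sub>R v"
    then have "osc (a - b) = osc (M (a - b) *\<^sub>R v)" by simp
    then show False using o osc_v by simp
  qed
  have n2: "b - a \<noteq> M (b - a) *\<^sub>R v"
  proof
    assume "b - a = M (b - a) *\<^sub>R v"
    then have "osc (b - a) = osc (M (b - a) *\<^sub>R v)" by simp
    then show False using o osc_v osc_sym[of "a - b"] by simp
  qed
  show ?thesis using M_flow[OF a b] M_flow[OF b a] n1 n2 t unfolding osc_def
    by (simp add: minus_diff_eq) (smt (verit))
qed

end


context tsys begin

theorem main:
  assumes xi: "\<xi> \<in> X" and bd: "bounded ((\<lambda>t. proj_perp v (phi t \<xi>)) ` {0..})"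
  shows "\<exists>e. ((\<lambda>t. proj_perp v (phi t \<xi>)) \<longlongrightarrow> e) at_top
                \<and> e \<in> X \<and> v \<bullet> e = 0 \<and> proj_perp v (f e) = 0
                \<and> (\<forall>e'. e' \<in> X \<and> v \<bullet> e' = 0 \<and> proj_perp v (f e') = 0 \<longrightarrow> e' = e)"
proof -
  define x where "x t = phi t \<xi>" for t
  define c where "c t = v \<bullet> x t" for t
  define p where "p t = proj_perp v (x t)" for t
  have p_eq: "p t = x t + (- c t) *\<^sub>R v" for t unfolding p_def c_def proj_perp_def by simp
  have xX: "x t \<in> X" if "t \<ge> 0" for t unfolding x_def using phiX_pos xi that by blast
  have pX: "p t \<in> X" if "t \<ge> 0" for t using xX[OF that] X_transl unfolding p_eq by blast
  have pv: "v \<bullet> p t = 0" for t unfolding p_def proj_perp_def using vv by (simp add: inner_diff_right)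
  have shift: "phi s (p t) = x (s + t) + (- c t) *\<^sub>R v" if s: "s \<ge> 0" and t: "t \<ge> 0" for s t
  proof -
    have "phi s (p t) = phi s (x t) + (- c t) *\<^sub>R v"
      unfolding p_eq using flow_transl xX[OF t] I_pos[OF xX[OF t] s] by blast
    also have "phi s (x t) = x (s + t)" unfolding x_def using semigroup[OF xi t s] .
    finally show ?thesis .
  qed
  define P where "P k = p (real k)" for k :: nat
  have "range P \<subseteq> (\<lambda>t. proj_perp v (phi t \<xi>)) ` {0..}" unfolding P_def p_def x_def by auto
  then have "bounded (range P)" using bd bounded_subset by blast
  then obtain q r where r: "strict_mono (r :: nat \<Rightarrow> nat)" and lim: "(P \<circ> r) \<longlonglongrightarrow> q"
    using bounded_imp_convergent_subsequence by blast
  define tk where "tk k = real (r k)" for k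
  have tk0: "tk k \<ge> 0" for k unfolding tk_def by simp
  have PrX: "(P \<circ> r) k \<in> X" for k unfolding P_def o_def using pX by simp
  have qX: "q \<in> X" using closed_sequentially[OF X_closed PrX lim] .
  have qv: "v \<bullet> q = 0"
  proof -
    have "(\<lambda>k. v \<bullet> (P \<circ> r) k) \<longlonglongrightarrow> v \<bullet> q" using lim by (intro tendsto_intros)
    moreover have "(\<lambda>k. v \<bullet> (P \<circ> r) k) = (\<lambda>k. 0)" using pv unfolding P_def by (simp add: o_def)
    ultimately have "(\<lambda>k. 0::real) \<longlonglongrightarrow> v \<bullet> q" by simp
    then show ?thesis by (simp add: LIMSEQ_const_iff)
  qed
  have Rp: "R > 0" by (rule R_pos)
  have close: "\<exists>N. \<forall>k\<ge>N. osc (p (tk k) - q) < \<epsilon>" if ep: "\<epsilon> > 0" for \<epsilon>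
  proof -
    have "\<epsilon> / (2 * R) > 0" using ep Rp by simp
    then obtain N where N: "\<forall>k\<ge>N. norm ((P \<circ> r) k - q) < \<epsilon> / (2 * R)"
      using lim[unfolded LIMSEQ_iff] by blast
    show ?thesis
    proof (intro exI allI impI)
      fix k assume "N \<le> k"
      then have "norm (p (tk k) - q) < \<epsilon> / (2 * R)" using N unfolding P_def tk_def by simp
      then have "2 * R * norm (p (tk k) - q) < \<epsilon>" using Rp by (simp add: field_simps)
      then show "osc (p (tk k) - q) < \<epsilon>" using osc_upper[of "p (tk k) - q"] by linarith
    qed
  qed
  have Dmono: "osc (x (t + u + h) - x (t + u)) \<le> osc (x (t + h) - x t)"
    if t: "t \<ge> 0" and u: "u \<ge> 0" and h: "h \<ge> 0" for t u h
  proof -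
    have e1: "x (t + u + h) = phi u (x (t + h))" unfolding x_def
      using semigroup[OF xi, of "t + h" u] t u h by (simp add: algebra_simps)
    have e2: "x (t + u) = phi u (x t)" unfolding x_def
      using semigroup[OF xi, of t u] t u by (simp add: algebra_simps)
    have X1: "x (t + h) \<in> X" using xX t h by simp
    have X2: "x t \<in> X" using xX t by simp
    show ?thesis unfolding e1 e2 by (rule osc_flow[OF X1 X2 u])
  qed
  have Dp: "osc (x (t + h) - x t) = osc (phi h (p t) - p t)" if t: "t \<ge> 0" and h: "h \<ge> 0" for t h
  proof -
    have "phi h (p t) - p t = x (t + h) - x t"
      apply (subst shift[OF h t])
      apply (subst p_eq[of t])
      by (simp add: add.commute)
    then show ?thesis by simp
  qed
  have claim1: "osc (phi h q - q) = 0" if h: "h \<ge> 0" for h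
  proof (rule ccontr)
    assume ne: "osc (phi h q - q) \<noteq> 0"
    define \<delta> where "\<delta> = osc (phi h q - q)"
    have \<delta>pos: "\<delta> > 0" using ne osc_nonneg[of "phi h q - q"] unfolding \<delta>_def by simp
    have hqX: "phi h q \<in> X" using phiX_pos qX h by blast
    define \<delta>' where "\<delta>' = osc (phi 1 (phi h q) - phi 1 q)"
    have \<delta>'lt: "\<delta>' < \<delta>" unfolding \<delta>'_def \<delta>_def
      using osc_flow_strict[OF hqX qX _ \<delta>pos[unfolded \<delta>_def]] by simp
    define \<epsilon> where "\<epsilon> = (\<delta> - \<delta>') / 5"
    have \<epsilon>pos: "\<epsilon> > 0" using \<delta>'lt unfolding \<epsilon>_def by simp
    obtain N where N: "\<forall>k\<ge>N. osc (p (tk k) - q) < \<epsilon>" using close[OF \<epsilon>pos] by blast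
    define k2 where "k2 = N + r N + 1"
    have k2N: "k2 \<ge> N" unfolding k2_def by simp
    have "r k2 \<ge> k2" using r by (simp add: strict_mono_imp_increasing)
    then have t21: "tk k2 \<ge> tk N + 1" unfolding tk_def k2_def by simp
    define P1 where "P1 = p (tk N)"
    define P2 where "P2 = p (tk k2)"
    have P1X: "P1 \<in> X" unfolding P1_def using pX tk0 by blast
    have P2X: "P2 \<in> X" unfolding P2_def using pX tk0 by blast
    have e1: "osc (P1 - q) < \<epsilon>" using N unfolding P1_def by simp
    have e2: "osc (P2 - q) < \<epsilon>" using N k2N unfolding P2_def by simp
    have eqA: "(phi h P2 - P2) + ((phi h q - phi h P2) + (P2 - q)) = phi h q - q"
      by (simp add: algebra_simps)
    have a1: "\<delta> \<le> osc (phi h P2 - P2) + osc ((phi h q - phi h P2) + (P2 - q))"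
      using osc_sub[of "phi h P2 - P2" "(phi h q - phi h P2) + (P2 - q)"] unfolding eqA \<delta>_def .
    have a2: "osc ((phi h q - phi h P2) + (P2 - q)) \<le> osc (phi h q - phi h P2) + osc (P2 - q)"
      by (rule osc_sub)
    have a3: "osc (phi h q - phi h P2) \<le> osc (q - P2)" by (rule osc_flow[OF qX P2X h])
    have a4: "osc (q - P2) = osc (P2 - q)" using osc_sym[of "P2 - q"] by simp
    have low: "\<delta> < osc (phi h P2 - P2) + 2 * \<epsilon>" using a1 a2 a3 a4 e2 by linarith
    have P1hX: "phi h P1 \<in> X" using phiX_pos P1X h by blast
    have eqB: "(phi 1 (phi h q) - phi 1 q) + ((phi 1 (phi h P1) - phi 1 (phi h q)) + (phi 1 q - phi 1 P1))
       = phi 1 (phi h P1) - phi 1 P1"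
      by (simp add: algebra_simps)
    have b1: "osc (phi 1 (phi h P1) - phi 1 P1) \<le> \<delta>' + osc ((phi 1 (phi h P1) - phi 1 (phi h q)) + (phi 1 q - phi 1 P1))"
      using osc_sub[of "phi 1 (phi h q) - phi 1 q" "(phi 1 (phi h P1) - phi 1 (phi h q)) + (phi 1 q - phi 1 P1)"]
      unfolding eqB \<delta>'_def .
    have b2: "osc ((phi 1 (phi h P1) - phi 1 (phi h q)) + (phi 1 q - phi 1 P1))
        \<le> osc (phi 1 (phi h P1) - phi 1 (phi h q)) + osc (phi 1 q - phi 1 P1)"
      by (rule osc_sub)
    have b3: "osc (phi 1 (phi h P1) - phi 1 (phi h q)) \<le> osc (phi h P1 - phi h q)"
      by (rule osc_flow[OF P1hX hqX]) simp
    have b4: "osc (phi h P1 - phi h q) \<le> osc (P1 - q)" by (rule osc_flow[OF P1X qX h])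
    have b5: "osc (phi 1 q - phi 1 P1) \<le> osc (q - P1)" by (rule osc_flow[OF qX P1X]) simp
    have b6: "osc (q - P1) = osc (P1 - q)" using osc_sym[of "P1 - q"] by simp
    have up: "osc (phi 1 (phi h P1) - phi 1 P1) < \<delta>' + 2 * \<epsilon>"
      using b1 b2 b3 b4 b5 b6 e1 by linarith
    have D2: "osc (phi h P2 - P2) = osc (x (tk k2 + h) - x (tk k2))"
      using Dp[OF tk0 h] unfolding P2_def by simp
    have f1: "phi 1 (phi h P1) = x (tk N + 1 + h) + (- c (tk N)) *\<^sub>R v"
    proof -
      have "phi 1 (phi h P1) = phi (1 + h) P1" using semigroup[OF P1X h, of 1] by simp
      also have "\<dots> = x (1 + h + tk N) + (- c (tk N)) *\<^sub>R v"
        unfolding P1_def by (rule shift) (use tk0 h in auto)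
      finally show ?thesis by (simp add: algebra_simps)
    qed
    have f2: "phi 1 P1 = x (tk N + 1) + (- c (tk N)) *\<^sub>R v"
      unfolding P1_def using shift[of 1 "tk N"] tk0 by (simp add: algebra_simps)
    have D1: "osc (phi 1 (phi h P1) - phi 1 P1) = osc (x (tk N + 1 + h) - x (tk N + 1))"
      unfolding f1 f2 by simp
    have mon: "osc (x (tk k2 + h) - x (tk k2)) \<le> osc (x (tk N + 1 + h) - x (tk N + 1))"
    proof -
      have "osc (x ((tk N + 1) + (tk k2 - (tk N + 1)) + h) - x ((tk N + 1) + (tk k2 - (tk N + 1))))
            \<le> osc (x (tk N + 1 + h) - x (tk N + 1))"
        by (rule Dmono) (use t21 tk0 h in auto)
      then show ?thesis by simp
    qed
    have s1: "\<delta> < osc (x (tk N + 1 + h) - x (tk N + 1)) + 2 * \<epsilon>" using low D2 mon by linarith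
    have s2: "\<delta> < \<delta>' + 4 * \<epsilon>" using s1 up D1 by linarith
    show False using s2 \<delta>'lt unfolding \<epsilon>_def by (simp add: field_simps)
  qed
  have claim2: "\<forall>h\<ge>0. \<exists>c. phi h q = q + c *\<^sub>R v"
  proof (intro allI impI)
    fix h :: real assume "h \<ge> 0"
    then have "phi h q - q = M (phi h q - q) *\<^sub>R v" using claim1 osc_zero by blast
    then have "phi h q = q + M (phi h q - q) *\<^sub>R v" by (metis add.commute diff_add_cancel)
    then show "\<exists>c. phi h q = q + c *\<^sub>R v" by blast
  qed
  have pfq: "proj_perp v (f q) = 0" by (rule equil_of_flow[OF qX claim2])
  have g_mono: "osc (p (t + u) - q) \<le> osc (p t - q)" if t: "t \<ge> 0" and u: "u \<ge> 0" for t u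
  proof -
    obtain cu where cu: "phi u q = q + cu *\<^sub>R v" using claim2 u by blast
    have "p (t + u) - q = (phi u (p t) - phi u q) + (cu + c t - c (t + u)) *\<^sub>R v"
      unfolding cu shift[OF u t] p_eq[of "t + u"]
      by (simp add: algebra_simps scaleR_add_left scaleR_diff_left)
    then have "osc (p (t + u) - q) = osc (phi u (p t) - phi u q)" by (simp add: osc_transl)
    also have "\<dots> \<le> osc (p t - q)" by (rule osc_flow[OF pX[OF t] qX u])
    finally show ?thesis .
  qed
  have B0: "B \<ge> 0" using B_bound[of 0] K0 vK by simp
  have conv: "((\<lambda>t. proj_perp v (phi t \<xi>)) \<longlongrightarrow> q) at_top"
  proof (rule tendstoI)
    fix \<epsilon> :: real assume ep: "\<epsilon> > 0"
    then have "\<epsilon> / (B + 1) > 0" using B0 by simp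
    then obtain N where N: "\<forall>k\<ge>N. osc (p (tk k) - q) < \<epsilon> / (B + 1)" using close by blast
    show "eventually (\<lambda>t. dist (proj_perp v (phi t \<xi>)) q < \<epsilon>) at_top"
      unfolding eventually_at_top_linorder
    proof (intro exI allI impI)
      fix t assume t: "tk N \<le> t"
      have "osc (p (tk N + (t - tk N)) - q) \<le> osc (p (tk N) - q)"
        by (rule g_mono) (use tk0 t in auto)
      then have "osc (p t - q) \<le> osc (p (tk N) - q)" by simp
      then have o: "osc (p t - q) < \<epsilon> / (B + 1)" using N by fastforce
      have "proj_perp v (p t - q) = p t - q" unfolding proj_perp_def using pv qv
        by (simp add: inner_diff_right)
      then have "norm (p t - q) \<le> B * osc (p t - q)" using proj_osc[of "p t - q"] by simp
      also have "\<dots> \<le> B * (\<epsilon> / (B + 1))" using o B0 by (intro mult_left_mono) auto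
      also have "\<dots> < \<epsilon>" using B0 ep by (simp add: field_simps)
      finally show "dist (proj_perp v (phi t \<xi>)) q < \<epsilon>" unfolding dist_norm p_def x_def .
    qed
  qed
  have uniq: "e' = q" if e'X: "e' \<in> X" and e'v: "v \<bullet> e' = 0" and e'f: "proj_perp v (f e') = 0" for e'
  proof -
    obtain cq where cq: "phi 1 q = q + cq *\<^sub>R v" using claim2 by force
    have "phi 1 e' = e' + (1 * (v \<bullet> f e')) *\<^sub>R v" by (rule equil_flow[OF e'X e'f])
    then have "phi 1 e' - phi 1 q = (e' - q) + (v \<bullet> f e' - cq) *\<^sub>R v" using cq
      by (simp add: algebra_simps scaleR_diff_left)
    then have eqo: "osc (phi 1 e' - phi 1 q) = osc (e' - q)" by (simp add: osc_transl)
    have "osc (e' - q) = 0"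
    proof (rule ccontr)
      assume "osc (e' - q) \<noteq> 0"
      then have "osc (e' - q) > 0" using osc_nonneg[of "e' - q"] by simp
      then show False using osc_flow_strict[OF e'X qX, of 1] eqo by simp
    qed
    then have z: "e' - q = M (e' - q) *\<^sub>R v" by (rule osc_zero)
    have "v \<bullet> (e' - q) = v \<bullet> (M (e' - q) *\<^sub>R v)" using z by (rule arg_cong)
    then have "v \<bullet> (e' - q) = M (e' - q)" using vv by simp
    then have "M (e' - q) = 0" using e'v qv by (simp add: inner_diff_right)
    then show "e' = q" using z by simp
  qed
  show ?thesis
    by (rule exI[of _ q]) (use conv qX qv pfq uniq in blast)
qed

end

theorem theorem1:
  fixes X K :: "(real ^ 'n) set" and f :: "real ^ 'n \<Rightarrow> real ^ 'n"
    and I :: "real ^ 'n \<Rightarrow> real set" and phi :: "real \<Rightarrow> real ^ 'n \<Rightarrow> real ^ 'n"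
    and v :: "real ^ 'n"
  assumes X_closed: "closed X" and X_reg: "X = closure (interior X)"
    and f_lip: "local_lipschitz (UNIV :: real set) X (\<lambda>_. f)"
    and flow: "is_max_flow X f I phi"
    and fwd_complete: "\<forall>\<xi>\<in>X. {0..} \<subseteq> interior (I \<xi>)"
    and K_closed: "closed K" and K_convex: "convex K" and K_cone: "pointed_cone K"
    and K_int: "interior K \<noteq> {}"
    and mono: "\<forall>\<xi>1\<in>X. \<forall>\<xi>2\<in>X. cone_gt K \<xi>1 \<xi>2 \<longrightarrow>
                 (\<forall>t>0. cone_gg K (phi t \<xi>1) (phi t \<xi>2))"
    and v_int: "v \<in> interior K" and v_norm: "norm v = 1"
    and X_transl: "\<forall>x\<in>X. \<forall>c::real. x + c *\<^sub>R v \<in> X"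
    and flow_transl: "\<forall>\<xi>\<in>X. \<forall>c::real. \<forall>t\<in>I \<xi>. phi t (\<xi> + c *\<^sub>R v) = phi t \<xi> + c *\<^sub>R v"
  shows "\<forall>\<xi>\<in>X. bounded ((\<lambda>t. proj_perp v (phi t \<xi>)) ` {0..}) \<longrightarrow>
           (\<exists>e. ((\<lambda>t. proj_perp v (phi t \<xi>)) \<longlongrightarrow> e) at_top
                \<and> e \<in> X \<and> v \<bullet> e = 0 \<and> proj_perp v (f e) = 0
                \<and> (\<forall>e'. e' \<in> X \<and> v \<bullet> e' = 0 \<and> proj_perp v (f e') = 0 \<longrightarrow> e' = e))"
proof -
  have T: "tsys K v X f I phi"
    unfolding tsys_def conev_def tsys_axioms_def
    using X_closed flow fwd_complete K_closed K_cone mono v_int v_norm X_transl flow_transl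
    by blast
  show ?thesis using tsys.main[OF T] by blast
qed

end
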